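(* Consider Algorithm 7 (described in the context) modified so that the query noise is $\nu_i=\mathrm{Lap}(c\Delta/\epsilon_2)$ instead of $\mathrm{Lap}(2c\Delta/\epsilon_2)$. If the query sequence is monotonic, then for all $\epsilon_1>0,\epsilon_2>0,\epsilon_3\ge0$, $\Delta>0$, integer $c\ge1$ and thresholds, this modified algorithm satisfies $(\epsilon_1+\epsilon_2+\epsilon_3)$-differential privacy: for all neighboring $D\simeq D'$ and every measurable set $S$ of outputs, $\Pr[\mathcal{A}(D)\in S]\le e^{\epsilon_1+\epsilon_2+\epsilon_3}\Pr[\mathcal{A}(D')\in S]$.
   Context: Two datasets are neighboring ($D\simeq D'$) if they differ in one tuple. A query $q$ has sensitivity at most $\Delta$ if $|q(D)-q(D')|\le\Delta$ for all $D\simeq D'$. A finite sequence of queries $q_1,\dots,q_n$ (each of sensitivity at most $\Delta$) is monotonic if for every pair of neighboring datasets $D\simeq D'$, either $q_i(D)\ge q_i(D')$ for all $i$, or $q_i(D)\le q_i(D')$ for all $i$. $\mathrm{Lap}(\beta)$ denotes a random variable with density $\frac{1}{2\beta}e^{-|x|/\beta}$; all noise variables are independent. Algorithm 7 (standard SVT): Input: dataset $D$, queries $q_1,q_2,\dots$, thresholds $T_1,T_2,\dots$, cutoff $c$, parameters $\epsilon_1,\epsilon_2,\epsilon_3$. Sample $\rho=\mathrm{Lap}(\Delta/\epsilon_1)$ once, set count $=0$. For each query $q_i$: sample $\nu_i=\mathrm{Lap}(2c\Delta/\epsilon_2)$; if $q_i(D)+\nu_i\ge T_i+\rho$, then output $a_i=q_i(D)+\mathrm{Lap}(c\Delta/\epsilon_3)$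 (fresh noise) if $\epsilon_3>0$, or $a_i=\top$ if $\epsilon_3=0$; increment count and abort if count $\ge c$. Otherwise output $a_i=\bot$. *)

theory Defs
  imports "HOL-Probability.Probability" "HOL-Library.Multiset"
begin

text \<open>Datasets are finite multisets of tuples. Two datasets are neighbouring if they
differ in one tuple: one is obtained from the other by adding, removing, or
replacing a single tuple.\<close>
definition neighbors :: "'a multiset \<Rightarrow> 'a multiset \<Rightarrow> bool" where
  "neighbors D D' \<longleftrightarrow> D \<noteq> D' \<and> size (D - D') \<le> 1 \<and> size (D' - D) \<le> 1"

definition sensitivity_le :: "('a multiset \<Rightarrow> real) \<Rightarrow> real \<Rightarrow> bool" where
  "sensitivity_le f \<Delta> \<longleftrightarrow> (\<forall>D D'. neighbors D D' \<longrightarrow> \<bar>f D - f D'\<bar> \<le> \<Delta>)"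

definition monotonic_queries :: "nat \<Rightarrow> (nat \<Rightarrow> 'a multiset \<Rightarrow> real) \<Rightarrow> bool" where
  "monotonic_queries n q \<longleftrightarrow> (\<forall>D D'. neighbors D D' \<longrightarrow>
      (\<forall>i<n. q i D \<ge> q i D') \<or> (\<forall>i<n. q i D \<le> q i D'))"

definition lap_density :: "real \<Rightarrow> real \<Rightarrow> real" where
  "lap_density b x = exp (- \<bar>x\<bar> / b) / (2 * b)"

definition Lap :: "real \<Rightarrow> real measure" where
  "Lap b = density lborel (\<lambda>x. ennreal (lap_density b x))"

text \<open>When \<open>\<epsilon>3 = 0\<close> the answer noises are never used; they are then
drawn from \<open>Lap 1\<close> merely to keep the noise space a probability space.\<close>
definition svt_noise :: "nat \<Rightarrow> nat \<Rightarrow> real \<Rightarrow> real \<Rightarrow> real \<Rightarrow> real \<Rightarrow>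
    (real \<times> (nat \<Rightarrow> real) \<times> (nat \<Rightarrow> real)) measure" where
  "svt_noise n c \<Delta> \<epsilon>1 \<epsilon>2 \<epsilon>3 =
     Lap (\<Delta> / \<epsilon>1) \<Otimes>\<^sub>M
     ((\<Pi>\<^sub>M i\<in>{..<n}. Lap (real c * \<Delta> / \<epsilon>2)) \<Otimes>\<^sub>M
      (\<Pi>\<^sub>M i\<in>{..<n}. Lap (if \<epsilon>3 > 0 then real c * \<Delta> / \<epsilon>3 else 1)))"

text \<open>Encoding of a single output slot as a pair (tag, value):
  tag 0 = \<open>\<bottom>\<close>; tag 1 = positive answer (value = noisy answer if \<open>\<epsilon>3 > 0\<close>,
  and value 0 standing for \<open>\<top>\<close> if \<open>\<epsilon>3 = 0\<close>); tag 2 = slot not reached because the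
  algorithm aborted earlier. An output of the algorithm is the function \<open>i \<mapsto> slot i\<close>
  on \<open>{..<n}\<close>, which determines the output list and vice versa.\<close>
definition svt_slot_space :: "(nat \<times> real) measure" where
  "svt_slot_space = count_space UNIV \<Otimes>\<^sub>M borel"

definition svt_out_space :: "nat \<Rightarrow> (nat \<Rightarrow> nat \<times> real) measure" where
  "svt_out_space n = (\<Pi>\<^sub>M i\<in>{..<n}. svt_slot_space)"

definition svt_test :: "(nat \<Rightarrow> 'a multiset \<Rightarrow> real) \<Rightarrow> (nat \<Rightarrow> real) \<Rightarrow> 'a multiset \<Rightarrow>
    real \<Rightarrow> (nat \<Rightarrow> real) \<Rightarrow> nat \<Rightarrow> bool" where
  "svt_test q T D \<rho> \<nu> i \<longleftrightarrow> q i D + \<nu> i \<ge> T i + \<rho>"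

text \<open>Query \<open>i\<close> is reached iff fewer than \<open>c\<close> earlier queries gave a positive
answer (the counter is incremented on each positive answer and the algorithm
aborts as soon as it reaches \<open>c\<close>).\<close>
definition svt_output :: "nat \<Rightarrow> nat \<Rightarrow> real \<Rightarrow> (nat \<Rightarrow> 'a multiset \<Rightarrow> real) \<Rightarrow> (nat \<Rightarrow> real) \<Rightarrow>
    'a multiset \<Rightarrow> real \<times> (nat \<Rightarrow> real) \<times> (nat \<Rightarrow> real) \<Rightarrow> (nat \<Rightarrow> nat \<times> real)" where
  "svt_output n c \<epsilon>3 q T D = (\<lambda>(\<rho>, \<nu>, \<eta>). \<lambda>i.
     if i < n then
       (if card {j. j < i \<and> svt_test q T D \<rho> \<nu> j} < c then
          (if svt_test q T D \<rho> \<nu> i then (1, if \<epsilon>3 > 0 then q i D + \<eta> i else 0)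
           else (0, 0))
        else (2, 0))
     else undefined)"

definition svt_mod :: "nat \<Rightarrow> nat \<Rightarrow> real \<Rightarrow> real \<Rightarrow> real \<Rightarrow> real \<Rightarrow>
    (nat \<Rightarrow> 'a multiset \<Rightarrow> real) \<Rightarrow> (nat \<Rightarrow> real) \<Rightarrow> 'a multiset \<Rightarrow> (nat \<Rightarrow> nat \<times> real) measure" where
  "svt_mod n c \<Delta> \<epsilon>1 \<epsilon>2 \<epsilon>3 q T D =
     distr (svt_noise n c \<Delta> \<epsilon>1 \<epsilon>2 \<epsilon>3) (svt_out_space n) (svt_output n c \<epsilon>3 q T D)"

end

theory Submission
  imports Defs
begin

lemma lap_density_nonneg: "b > 0 \<Longrightarrow> 0 \<le> lap_density b x"
  by (simp add: lap_density_def)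

lemma lap_density_measurable[measurable]: "lap_density b \<in> borel_measurable borel"
  unfolding lap_density_def by measurable

lemma sets_Lap[simp, measurable_cong]: "sets (Lap b) = sets borel"
  by (simp add: Lap_def)

lemma space_Lap[simp]: "space (Lap b) = UNIV"
  by (simp add: Lap_def)

lemma prob_space_Lap:
  assumes b: "b > 0" shows "prob_space (Lap b)"
proof -
  let ?e = "exponential_density (1/b)"
  have e1: "(\<integral>\<^sup>+x. ennreal (?e x) \<partial>lborel) = 1"
  proof -
    interpret prob_space "density lborel ?e" using b by (intro prob_space_exponential_density) simp
    have "emeasure (density lborel ?e) UNIV = 1" using emeasure_space_1 by simp
    then show ?thesis by (simp add: emeasure_density)
  qed
  have e2: "(\<integral>\<^sup>+x. ennreal (?e (- x)) \<partial>lborel) = 1"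
    using nn_integral_real_affine[of "\<lambda>x. ennreal (?e x)" "-1" 0] e1 by simp
  have "(\<integral>\<^sup>+x. ennreal (lap_density b x) \<partial>lborel) =
        (\<integral>\<^sup>+x. ennreal (?e x) / 2 + ennreal (?e (-x)) / 2 \<partial>lborel)"
  proof (rule nn_integral_cong_AE)
    show "AE x in lborel. ennreal (lap_density b x) = ennreal (?e x) / 2 + ennreal (?e (- x)) / 2"
      using AE_lborel_singleton[of "0::real"]
    proof eventually_elim
      case (elim x)
      have nn: "0 \<le> ?e y" for y using b by (simp add: exponential_density_def)
      have "ennreal (?e x) / 2 + ennreal (?e (- x)) / 2 = ennreal (?e x / 2 + ?e (-x) / 2)"
        using nn by (simp add: ennreal_divide_numeral)
      also have "?e x / 2 + ?e (-x) / 2 = lap_density b x"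
        using elim b by (auto simp: exponential_density_def lap_density_def)
      finally show ?case by simp
    qed
  qed
  also have "\<dots> = (\<integral>\<^sup>+x. ennreal (?e x) \<partial>lborel) / 2 + (\<integral>\<^sup>+x. ennreal (?e (-x)) \<partial>lborel) / 2"
    by (subst nn_integral_add) (auto simp: nn_integral_divide)
  also have "\<dots> = 1" using e1 e2 by (simp add: mult_2[symmetric] ennreal_times_divide)
  finally show ?thesis
    by (intro prob_spaceI) (simp add: Lap_def emeasure_density)
qed

lemma lap_shift_le:
  assumes b: "b > 0"
  shows "lap_density b (x - d) \<le> exp (\<bar>d\<bar> / b) * lap_density b x"
proof -
  have "- \<bar>x - d\<bar> / b \<le> \<bar>d\<bar> / b + - \<bar>x\<bar> / b"
    using b by (simp add: divide_simps)
  then have "exp (- \<bar>x - d\<bar> / b) \<le> exp (\<bar>d\<bar> / b) * exp (- \<bar>x\<bar> / b)"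
    by (simp add: exp_add[symmetric])
  then show ?thesis using b by (simp add: lap_density_def divide_right_mono)
qed

lemma nn_integral_Lap_shift:
  assumes b: "b > 0" and f[measurable]: "f \<in> borel_measurable borel"
  shows "(\<integral>\<^sup>+x. f (x + d) \<partial>Lap b) \<le> ennreal (exp (\<bar>d\<bar> / b)) * (\<integral>\<^sup>+x. f x \<partial>Lap b)"
proof -
  have "(\<integral>\<^sup>+x. f (x + d) \<partial>Lap b) = (\<integral>\<^sup>+x. ennreal (lap_density b x) * f (x + d) \<partial>lborel)"
    unfolding Lap_def by (simp add: nn_integral_density)
  also have "\<dots> = (\<integral>\<^sup>+x. ennreal (lap_density b (x - d)) * f x \<partial>lborel)"
    using nn_integral_real_affine[of "\<lambda>x. ennreal (lap_density b x) * f (x + d)" 1 "-d"] by simp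
  also have "\<dots> \<le> (\<integral>\<^sup>+x. ennreal (exp (\<bar>d\<bar> / b)) * (ennreal (lap_density b x) * f x) \<partial>lborel)"
  proof (rule nn_integral_mono)
    fix x
    have "ennreal (lap_density b (x - d)) \<le> ennreal (exp (\<bar>d\<bar> / b) * lap_density b x)"
      using lap_shift_le[OF b] by (rule ennreal_leI)
    also have "\<dots> = ennreal (exp (\<bar>d\<bar> / b)) * ennreal (lap_density b x)"
      by (simp add: ennreal_mult lap_density_nonneg[OF b])
    finally show "ennreal (lap_density b (x - d)) * f x \<le> ennreal (exp (\<bar>d\<bar> / b)) * (ennreal (lap_density b x) * f x)"
      by (simp add: mult.assoc[symmetric] mult_right_mono)
  qed
  also have "\<dots> = ennreal (exp (\<bar>d\<bar> / b)) * (\<integral>\<^sup>+x. f x \<partial>Lap b)"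
    unfolding Lap_def by (simp add: nn_integral_density nn_integral_cmult)
  finally show ?thesis .
qed

definition gslot :: "nat \<Rightarrow> real \<Rightarrow> real \<Rightarrow> real \<Rightarrow> nat \<Rightarrow> real \<times> real \<Rightarrow> nat \<times> real" where
  "gslot c e ai mi k y = (if k < c then (if ai \<le> fst y then (1, if e > 0 then mi + snd y else 0) else (0, 0)) else (2, 0))"

definition gout :: "nat \<Rightarrow> nat \<Rightarrow> real \<Rightarrow> (nat \<Rightarrow> real) \<Rightarrow> (nat \<Rightarrow> real) \<Rightarrow>
    (nat \<Rightarrow> real) \<times> (nat \<Rightarrow> real) \<Rightarrow> nat \<Rightarrow> nat \<times> real" where
  "gout n c e a m x = (\<lambda>i. if i < n then gslot c e (a i) (m i) (card {j. j < i \<and> a j \<le> fst x j}) (fst x i, snd x i) else undefined)"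

definition Kcnt :: "nat \<Rightarrow> (nat \<Rightarrow> nat \<times> real) \<Rightarrow> nat" where
  "Kcnt n w = card {j. j < n \<and> fst (w j) = 1}"

lemma card_less_Suc: "card {j. j < Suc n \<and> P j} = card {j. j < n \<and> P j} + (if P n then 1 else 0)"
proof -
  have "{j. j < Suc n \<and> P j} = {j. j < n \<and> P j} \<union> (if P n then {n} else {})"
    by (auto simp: less_Suc_eq)
  then show ?thesis by (simp add: card_Un_disjoint)
qed

lemma gslot_min: "gslot c e ai mi (min c k) y = gslot c e ai mi k y"
  by (simp add: gslot_def)

lemma Kcnt_upd: "Kcnt n (f(n := s)) = Kcnt n f"
  unfolding Kcnt_def by (rule arg_cong[where f=card]) auto

lemma Kcnt_Suc: "Kcnt (Suc n) f = Kcnt n f + (if fst (f n) = 1 then 1 else 0)"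
  unfolding Kcnt_def by (rule card_less_Suc)

lemma gout_Suc_raw: "gout (Suc n) c e a m x =
    (gout n c e a m x)(n := gslot c e (a n) (m n) (card {j. j < n \<and> a j \<le> fst x j}) (fst x n, snd x n))"
  by (auto simp: gout_def fun_eq_iff less_Suc_eq)

lemma Kcnt_gout: "Kcnt n (gout n c e a m x) = min c (card {j. j < n \<and> a j \<le> fst x j})"
proof (induction n)
  case 0 then show ?case by (simp add: Kcnt_def)
next
  case (Suc n)
  show ?case
    unfolding gout_Suc_raw Kcnt_Suc Kcnt_upd Suc card_less_Suc
    by (auto simp: gslot_def)
qed

lemma gout_Suc: "gout (Suc n) c e a m x =
    (gout n c e a m x)(n := gslot c e (a n) (m n) (Kcnt n (gout n c e a m x)) (fst x n, snd x n))"
  unfolding gout_Suc_raw Kcnt_gout gslot_min ..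

lemma Kcnt_le: "Kcnt n (gout n c e a m x) \<le> c"
  unfolding Kcnt_gout by simp

abbreviation "PB n \<equiv> PiM {..<n} (\<lambda>_. (borel :: real measure))"

lemma measurable_fst_comp:
  assumes "j < n"
  shows "(\<lambda>x. fst x j) \<in> borel_measurable (PB n \<Otimes>\<^sub>M PB n)"
  using assms by (intro measurable_compose[OF measurable_fst measurable_component_singleton]) auto

lemma measurable_snd_comp:
  assumes "j < n"
  shows "(\<lambda>x. snd x j) \<in> borel_measurable (PB n \<Otimes>\<^sub>M PB n)"
  using assms by (intro measurable_compose[OF measurable_snd measurable_component_singleton]) auto

lemma card_tests_sum: "real (card {j. j < (k::nat) \<and> P j}) = (\<Sum>j<k. if P j then 1 else 0)"
  by (induction k) (simp_all add: card_less_Suc)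

lemma measurable_card_tests:
  assumes "k \<le> (n::nat)"
  shows "(\<lambda>x. real (card {j. j < k \<and> a j \<le> fst x j})) \<in> borel_measurable (PB n \<Otimes>\<^sub>M PB n)"
  unfolding card_tests_sum
proof (rule borel_measurable_sum)
  fix j assume "j \<in> {..<k}"
  then have [measurable]: "(\<lambda>x. fst x j) \<in> borel_measurable (PB n \<Otimes>\<^sub>M PB n)"
    using assms by (intro measurable_fst_comp) (simp add: less_le_trans)
  show "(\<lambda>x. if a j \<le> fst x j then 1 else 0 :: real) \<in> borel_measurable (PB n \<Otimes>\<^sub>M PB n)"
    by measurable
qed

lemma measurable_gout:
  "gout n c e a m \<in> measurable (PB n \<Otimes>\<^sub>M PB n) (svt_out_space n)"
proof -
  have eq: "gout n c e a m = (\<lambda>x i. if i < n then gslot c e (a i) (m i) (card {j. j < i \<and> a j \<le> fst x j}) (fst x i, snd x i) else undefined)"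
    by (simp add: gout_def fun_eq_iff)
  show ?thesis
    unfolding eq svt_out_space_def
  proof (rule measurable_PiM_single')
    fix i assume "i \<in> {..<n}"
    then have i: "i < n" by simp
    have [measurable]: "(\<lambda>x. real (card {j. j < i \<and> a j \<le> fst x j})) \<in> borel_measurable (PB n \<Otimes>\<^sub>M PB n)"
      using i by (intro measurable_card_tests) simp
    have [measurable]: "(\<lambda>x. fst x i) \<in> borel_measurable (PB n \<Otimes>\<^sub>M PB n)"
      using i by (intro measurable_fst_comp)
    have [measurable]: "(\<lambda>x. snd x i) \<in> borel_measurable (PB n \<Otimes>\<^sub>M PB n)"
      using i by (intro measurable_snd_comp)
    have e2: "(\<lambda>x. if i < n then gslot c e (a i) (m i) (card {j. j < i \<and> a j \<le> fst x j}) (fst x i, snd x i) else undefined)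
      = (\<lambda>x. if real (card {j. j < i \<and> a j \<le> fst x j}) < real c then (if a i \<le> fst x i then (1, if e > 0 then m i + snd x i else 0) else (0, 0)) else (2, 0))"
      using i by (simp add: gslot_def fun_eq_iff)
    show "(\<lambda>x. if i < n then gslot c e (a i) (m i) (card {j. j < i \<and> a j \<le> fst x j}) (fst x i, snd x i) else undefined)
      \<in> measurable (PB n \<Otimes>\<^sub>M PB n) svt_slot_space"
      unfolding e2 svt_slot_space_def
      by (intro measurable_If measurable_Pair measurable_const borel_measurable_less borel_measurable_le
            borel_measurable_add measurable_ident) auto
  qed (auto simp: PiE_def extensional_def svt_slot_space_def space_pair_measure)
qed

lemma measurable_Kcnt:
  "(\<lambda>w. real (Kcnt n w)) \<in> borel_measurable (svt_out_space n)"
proof -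
  have "(\<lambda>w. real (Kcnt n w)) = (\<lambda>w. \<Sum>j<n. (\<lambda>v. if fst v = 1 then 1 else 0) (w j))"
  proof
    fix w show "real (Kcnt n w) = (\<Sum>j<n. (\<lambda>v. if fst v = 1 then 1 else 0) (w j))"
      by (induction n) (simp_all add: Kcnt_Suc Kcnt_def[of 0])
  qed
  moreover have "(\<lambda>v. if fst v = 1 then 1 else (0::real)) \<in> borel_measurable svt_slot_space"
    unfolding svt_slot_space_def by measurable
  ultimately show ?thesis
    unfolding svt_out_space_def
    by (simp add: borel_measurable_sum measurable_compose[OF measurable_component_singleton])
qed

lemma measurable_gupd:
  "(\<lambda>(w, y). w(n := gslot c e ai mi (Kcnt n w) y)) \<in>
     measurable (svt_out_space n \<Otimes>\<^sub>M (borel \<Otimes>\<^sub>M borel)) (svt_out_space (Suc n))"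
proof -
  have [measurable]: "(\<lambda>w. real (Kcnt n w)) \<in> borel_measurable (svt_out_space n)"
    by (rule measurable_Kcnt)
  have h: "(\<lambda>(w, y). gslot c e ai mi (Kcnt n w) y) \<in> measurable (svt_out_space n \<Otimes>\<^sub>M (borel \<Otimes>\<^sub>M borel)) svt_slot_space"
  proof -
    have "(\<lambda>(w, y). gslot c e ai mi (Kcnt n w) y) = (\<lambda>p. if real (Kcnt n (fst p)) < real c then (if ai \<le> fst (snd p) then (1, if e > 0 then mi + snd (snd p) else 0) else (0, 0)) else (2, 0))"
      by (auto simp: gslot_def fun_eq_iff)
    moreover have "(\<lambda>p. if real (Kcnt n (fst p)) < real c then (if ai \<le> fst (snd p) then (1, if e > 0 then mi + snd (snd p) else 0) else (0, 0)) else (2::nat, 0::real))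
       \<in> measurable (svt_out_space n \<Otimes>\<^sub>M (borel \<Otimes>\<^sub>M borel)) (count_space UNIV \<Otimes>\<^sub>M borel)"
      by (intro measurable_If measurable_Pair measurable_const borel_measurable_less borel_measurable_le
            borel_measurable_add measurable_ident measurable_compose[OF measurable_fst measurable_Kcnt]
            measurable_compose[OF measurable_snd measurable_fst] measurable_compose[OF measurable_snd measurable_snd]) auto
    ultimately show ?thesis unfolding svt_slot_space_def by (simp only:)
  qed
  have "(\<lambda>p. (fst p)(n := (\<lambda>(w, y). gslot c e ai mi (Kcnt n w) y) p)) \<in>
     measurable (svt_out_space n \<Otimes>\<^sub>M (borel \<Otimes>\<^sub>M borel)) (svt_out_space (Suc n))"
    unfolding svt_out_space_def
    by (rule measurable_fun_upd[where J="{..<n}"]) (auto intro: h[unfolded svt_out_space_def])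
  then show ?thesis by (simp add: case_prod_beta')
qed

lemma split_N:
  fixes f :: "(nat \<Rightarrow> real) \<times> (nat \<Rightarrow> real) \<Rightarrow> ennreal"
  assumes b2: "b2 > 0" and b3: "b3 > 0"
    and f[measurable]: "f \<in> borel_measurable (PiM {..<Suc n} (\<lambda>_. Lap b2) \<Otimes>\<^sub>M PiM {..<Suc n} (\<lambda>_. Lap b3))"
  shows "(\<integral>\<^sup>+x. f x \<partial>(PiM {..<Suc n} (\<lambda>_. Lap b2) \<Otimes>\<^sub>M PiM {..<Suc n} (\<lambda>_. Lap b3))) =
    (\<integral>\<^sup>+x. \<integral>\<^sup>+y. f ((fst x)(n := fst y), (snd x)(n := snd y)) \<partial>(Lap b2 \<Otimes>\<^sub>M Lap b3)
       \<partial>(PiM {..<n} (\<lambda>_. Lap b2) \<Otimes>\<^sub>M PiM {..<n} (\<lambda>_. Lap b3)))"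
proof -
  interpret L2: prob_space "Lap b2" by (rule prob_space_Lap[OF b2])
  interpret L3: prob_space "Lap b3" by (rule prob_space_Lap[OF b3])
  interpret P2: product_sigma_finite "\<lambda>_::nat. Lap b2"
    by (simp add: product_sigma_finite_def L2.sigma_finite_measure_axioms)
  interpret P3: product_sigma_finite "\<lambda>_::nat. Lap b3"
    by (simp add: product_sigma_finite_def L3.sigma_finite_measure_axioms)
  interpret Q2: prob_space "PiM {..<n} (\<lambda>_. Lap b2)" by (rule prob_space_PiM) (rule prob_space_Lap[OF b2])
  interpret Q3: prob_space "PiM {..<n} (\<lambda>_. Lap b3)" by (rule prob_space_PiM) (rule prob_space_Lap[OF b3])
  interpret R2: prob_space "PiM {..<Suc n} (\<lambda>_. Lap b2)" by (rule prob_space_PiM) (rule prob_space_Lap[OF b2])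
  interpret R3: prob_space "PiM {..<Suc n} (\<lambda>_. Lap b3)" by (rule prob_space_PiM) (rule prob_space_Lap[OF b3])
  interpret F: pair_sigma_finite "Lap b2" "PiM {..<n} (\<lambda>_. Lap b3)" ..
  have ins: "{..<Suc n} = insert n {..<n}" by auto
  let ?g = "\<lambda>x y. f ((fst x)(n := fst y), (snd x)(n := snd y))"
  have upd[measurable]: "(\<lambda>(x, y). ((fst x)(n := fst y), (snd x)(n := snd y))) \<in> measurable
     ((PiM {..<n} (\<lambda>_. Lap b2) \<Otimes>\<^sub>M PiM {..<n} (\<lambda>_. Lap b3)) \<Otimes>\<^sub>M (Lap b2 \<Otimes>\<^sub>M Lap b3))
     (PiM {..<Suc n} (\<lambda>_. Lap b2) \<Otimes>\<^sub>M PiM {..<Suc n} (\<lambda>_. Lap b3))"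
  proof -
    have 1: "(\<lambda>p. (fst (fst p))(n := fst (snd p))) \<in> measurable
     ((PiM {..<n} (\<lambda>_. Lap b2) \<Otimes>\<^sub>M PiM {..<n} (\<lambda>_. Lap b3)) \<Otimes>\<^sub>M (Lap b2 \<Otimes>\<^sub>M Lap b3))
     (PiM {..<Suc n} (\<lambda>_. Lap b2))"
      by (rule measurable_fun_upd[where J="{..<n}"]) auto
    have 2: "(\<lambda>p. (snd (fst p))(n := snd (snd p))) \<in> measurable
     ((PiM {..<n} (\<lambda>_. Lap b2) \<Otimes>\<^sub>M PiM {..<n} (\<lambda>_. Lap b3)) \<Otimes>\<^sub>M (Lap b2 \<Otimes>\<^sub>M Lap b3))
     (PiM {..<Suc n} (\<lambda>_. Lap b3))"
      by (rule measurable_fun_upd[where J="{..<n}"]) auto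
    show ?thesis using measurable_Pair[OF 1 2] by (simp add: case_prod_beta')
  qed
  have gm: "(\<lambda>(x, y). ?g x y) \<in> borel_measurable
     ((PiM {..<n} (\<lambda>_. Lap b2) \<Otimes>\<^sub>M PiM {..<n} (\<lambda>_. Lap b3)) \<Otimes>\<^sub>M (Lap b2 \<Otimes>\<^sub>M Lap b3))"
    using measurable_compose[OF upd f] by (simp add: case_prod_beta')
  have "(\<integral>\<^sup>+x. f x \<partial>(PiM {..<Suc n} (\<lambda>_. Lap b2) \<Otimes>\<^sub>M PiM {..<Suc n} (\<lambda>_. Lap b3)))
      = (\<integral>\<^sup>+v. \<integral>\<^sup>+w. f (v, w) \<partial>PiM {..<Suc n} (\<lambda>_. Lap b3) \<partial>PiM {..<Suc n} (\<lambda>_. Lap b2))"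
    by (rule R3.nn_integral_fst[symmetric]) simp
  also have "\<dots> = (\<integral>\<^sup>+v. \<integral>\<^sup>+t. \<integral>\<^sup>+w. f (v(n := t), w) \<partial>PiM {..<Suc n} (\<lambda>_. Lap b3) \<partial>Lap b2 \<partial>PiM {..<n} (\<lambda>_. Lap b2))"
  proof -
    have "(\<lambda>v. \<integral>\<^sup>+w. f (v, w) \<partial>PiM {..<Suc n} (\<lambda>_. Lap b3)) \<in> borel_measurable (PiM {..<Suc n} (\<lambda>_. Lap b2))"
      by (rule R3.borel_measurable_nn_integral) simp
    then show ?thesis unfolding ins by (intro P2.product_nn_integral_insert) auto
  qed
  also have "\<dots> = (\<integral>\<^sup>+v. \<integral>\<^sup>+t. \<integral>\<^sup>+w. \<integral>\<^sup>+u. f (v(n := t), w(n := u)) \<partial>Lap b3 \<partial>PiM {..<n} (\<lambda>_. Lap b3) \<partial>Lap b2 \<partial>PiM {..<n} (\<lambda>_. Lap b2))"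
  proof (intro nn_integral_cong)
    fix v t assume v: "v \<in> space (PiM {..<n} (\<lambda>_. Lap b2))"
    have vt: "v(n := t) \<in> space (PiM {..<Suc n} (\<lambda>_. Lap b2))"
      using v by (auto simp: space_PiM PiE_def extensional_def)
    show "(\<integral>\<^sup>+w. f (v(n := t), w) \<partial>PiM {..<Suc n} (\<lambda>_. Lap b3)) =
          (\<integral>\<^sup>+w. \<integral>\<^sup>+u. f (v(n := t), w(n := u)) \<partial>Lap b3 \<partial>PiM {..<n} (\<lambda>_. Lap b3))"
    proof -
      have "(\<lambda>w. f (v(n := t), w)) \<in> borel_measurable (PiM {..<Suc n} (\<lambda>_. Lap b3))"
        by (rule measurable_compose_Pair1[OF vt]) simp
      then show ?thesis unfolding ins by (intro P3.product_nn_integral_insert) auto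
    qed
  qed
  also have "\<dots> = (\<integral>\<^sup>+v. \<integral>\<^sup>+w. \<integral>\<^sup>+t. \<integral>\<^sup>+u. f (v(n := t), w(n := u)) \<partial>Lap b3 \<partial>Lap b2 \<partial>PiM {..<n} (\<lambda>_. Lap b3) \<partial>PiM {..<n} (\<lambda>_. Lap b2))"
  proof (intro nn_integral_cong)
    fix v assume v: "v \<in> space (PiM {..<n} (\<lambda>_. Lap b2))"
    show "(\<integral>\<^sup>+t. \<integral>\<^sup>+w. \<integral>\<^sup>+u. f (v(n := t), w(n := u)) \<partial>Lap b3 \<partial>PiM {..<n} (\<lambda>_. Lap b3) \<partial>Lap b2) =
      (\<integral>\<^sup>+w. \<integral>\<^sup>+t. \<integral>\<^sup>+u. f (v(n := t), w(n := u)) \<partial>Lap b3 \<partial>Lap b2 \<partial>PiM {..<n} (\<lambda>_. Lap b3))"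
    proof (rule F.Fubini'[symmetric])
      have 1: "(\<lambda>p. v(n := fst (fst p))) \<in> measurable ((Lap b2 \<Otimes>\<^sub>M PiM {..<n} (\<lambda>_. Lap b3)) \<Otimes>\<^sub>M Lap b3)
          (PiM {..<Suc n} (\<lambda>_. Lap b2))"
        by (rule measurable_fun_upd[where J="{..<n}"]) (auto simp: v)
      have 2: "(\<lambda>p. (snd (fst p))(n := snd p)) \<in> measurable ((Lap b2 \<Otimes>\<^sub>M PiM {..<n} (\<lambda>_. Lap b3)) \<Otimes>\<^sub>M Lap b3)
          (PiM {..<Suc n} (\<lambda>_. Lap b3))"
        by (rule measurable_fun_upd[where J="{..<n}"]) auto
      have "(\<lambda>p. f (v(n := fst (fst p)), (snd (fst p))(n := snd p))) \<in> borel_measurable ((Lap b2 \<Otimes>\<^sub>M PiM {..<n} (\<lambda>_. Lap b3)) \<Otimes>\<^sub>M Lap b3)"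
        using measurable_compose[OF measurable_Pair[OF 1 2] f] .
      then show "(\<lambda>(t, w). \<integral>\<^sup>+u. f (v(n := t), w(n := u)) \<partial>Lap b3) \<in> borel_measurable (Lap b2 \<Otimes>\<^sub>M PiM {..<n} (\<lambda>_. Lap b3))"
        by (intro measurable_cong[THEN iffD1, OF _ L3.borel_measurable_nn_integral[of "\<lambda>p u. f (v(n := fst p), (snd p)(n := u))"]])
          (auto simp: case_prod_beta')
    qed
  qed
  also have "\<dots> = (\<integral>\<^sup>+v. \<integral>\<^sup>+w. \<integral>\<^sup>+y. ?g (v, w) y \<partial>(Lap b2 \<Otimes>\<^sub>M Lap b3) \<partial>PiM {..<n} (\<lambda>_. Lap b3) \<partial>PiM {..<n} (\<lambda>_. Lap b2))"
  proof (intro nn_integral_cong)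
    fix v w assume v: "v \<in> space (PiM {..<n} (\<lambda>_. Lap b2))" and w: "w \<in> space (PiM {..<n} (\<lambda>_. Lap b3))"
    have vw: "(v, w) \<in> space (PiM {..<n} (\<lambda>_. Lap b2) \<Otimes>\<^sub>M PiM {..<n} (\<lambda>_. Lap b3))"
      using v w by (simp add: space_pair_measure)
    show "(\<integral>\<^sup>+t. \<integral>\<^sup>+u. f (v(n := t), w(n := u)) \<partial>Lap b3 \<partial>Lap b2) = (\<integral>\<^sup>+y. ?g (v, w) y \<partial>(Lap b2 \<Otimes>\<^sub>M Lap b3))"
      using L3.nn_integral_fst[OF measurable_compose_Pair1[OF vw gm]] by simp
  qed
  also have "\<dots> = (\<integral>\<^sup>+x. \<integral>\<^sup>+y. ?g x y \<partial>(Lap b2 \<Otimes>\<^sub>M Lap b3)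
       \<partial>(PiM {..<n} (\<lambda>_. Lap b2) \<Otimes>\<^sub>M PiM {..<n} (\<lambda>_. Lap b3)))"
  proof (rule Q3.nn_integral_fst)
    interpret LL: prob_space "Lap b2 \<Otimes>\<^sub>M Lap b3"
      by (rule prob_space_pair) (rule prob_space_Lap, fact)+
    show "(\<lambda>x. \<integral>\<^sup>+y. ?g x y \<partial>(Lap b2 \<Otimes>\<^sub>M Lap b3)) \<in> borel_measurable (PiM {..<n} (\<lambda>_. Lap b2) \<Otimes>\<^sub>M PiM {..<n} (\<lambda>_. Lap b3))"
      using LL.borel_measurable_nn_integral[OF gm] by simp
  qed
  finally show ?thesis by simp
qed

lemma measurable_gslot:
  "gslot c e ai mi k \<in> measurable (borel \<Otimes>\<^sub>M borel) svt_slot_space"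
proof -
  have "gslot c e ai mi k = (\<lambda>y. if k < c then (if ai \<le> fst y then (1, if e > 0 then mi + snd y else 0) else (0, 0)) else (2::nat, 0::real))"
    by (simp add: gslot_def fun_eq_iff)
  moreover have "(\<lambda>y. if k < c then (if ai \<le> fst y then (1, if e > 0 then mi + snd y else 0) else (0, 0)) else (2::nat, 0::real))
     \<in> measurable (borel \<Otimes>\<^sub>M borel) (count_space UNIV \<Otimes>\<^sub>M borel)"
    by (intro measurable_If measurable_Pair measurable_const borel_measurable_le
            borel_measurable_add measurable_fst measurable_snd) auto
  ultimately show ?thesis unfolding svt_slot_space_def by (simp only:)
qed

lemma slot_expand:
  fixes g F :: "nat \<times> real \<Rightarrow> ennreal"
  assumes b2: "b2 > 0" and b3: "b3 > 0" and True: "k < c"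
    and g[measurable]: "g \<in> borel_measurable svt_slot_space" and Fm[measurable]: "F \<in> borel_measurable svt_slot_space"
  shows "(\<integral>\<^sup>+y. g (gslot c e a m k y) * F (gslot c e a m k y) \<partial>(Lap b2 \<Otimes>\<^sub>M Lap b3))
       = (\<integral>\<^sup>+u. g (1, if e > 0 then m + u else 0) * F (1, if e > 0 then m + u else 0) \<partial>Lap b3) * (\<integral>\<^sup>+t. indicator {a..} t \<partial>Lap b2)
         + g (0, 0) * F (0, 0) * (\<integral>\<^sup>+t. indicator {..<a} t \<partial>Lap b2)"
proof -
  interpret L2: prob_space "Lap b2" by (rule prob_space_Lap[OF b2])
  interpret L3: prob_space "Lap b3" by (rule prob_space_Lap[OF b3])
  have sm: "gslot c e a m k \<in> measurable (Lap b2 \<Otimes>\<^sub>M Lap b3) svt_slot_space"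
    using measurable_gslot by (simp cong: measurable_cong_sets)
  define X' where "X' = (\<integral>\<^sup>+u. g (1, if e > 0 then m + u else 0) * F (1, if e > 0 then m + u else 0) \<partial>Lap b3)"
  have "(\<integral>\<^sup>+y. g (gslot c e a m k y) * F (gslot c e a m k y) \<partial>(Lap b2 \<Otimes>\<^sub>M Lap b3)) =
    (\<integral>\<^sup>+t. \<integral>\<^sup>+u. g (gslot c e a m k (t, u)) * F (gslot c e a m k (t, u)) \<partial>Lap b3 \<partial>Lap b2)"
    by (rule L3.nn_integral_fst[symmetric]) (use sm in measurable)
  also have "\<dots> = (\<integral>\<^sup>+t. X' * indicator {a..} t + g (0, 0) * F (0, 0) * indicator {..<a} t \<partial>Lap b2)"
  proof (intro nn_integral_cong)
    fix t
    have e1: "emeasure (Lap b3) UNIV = 1" using L3.emeasure_space_1 by simp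
    show "(\<integral>\<^sup>+u. g (gslot c e a m k (t, u)) * F (gslot c e a m k (t, u)) \<partial>Lap b3) =
      X' * indicator {a..} t + g (0, 0) * F (0, 0) * indicator {..<a} t"
      using True by (cases "a \<le> t") (auto simp: gslot_def X'_def e1 intro!: nn_integral_cong)
  qed
  also have "\<dots> = X' * (\<integral>\<^sup>+t. indicator {a..} t \<partial>Lap b2) + g (0, 0) * F (0, 0) * (\<integral>\<^sup>+t. indicator {..<a} t \<partial>Lap b2)"
    by (subst nn_integral_add) (auto simp: nn_integral_cmult)
  finally show ?thesis by (simp add: X'_def)
qed

lemma slot_ineq:
  fixes g :: "nat \<times> real \<Rightarrow> ennreal"
  assumes b2: "b2 > 0" and b3: "b3 > 0" and aa: "ai \<le> ai'" "ai' - ai \<le> l2 * b2"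
    and mm: "e > 0 \<Longrightarrow> \<bar>mi - mi'\<bar> \<le> l3 * b3" and l3: "0 \<le> l3"
    and g[measurable]: "g \<in> borel_measurable svt_slot_space"
  shows "(\<integral>\<^sup>+y. g (gslot c e ai mi k y) \<partial>(Lap b2 \<Otimes>\<^sub>M Lap b3)) \<le>
    (\<integral>\<^sup>+y. g (gslot c e ai' mi' k y) * (if fst (gslot c e ai' mi' k y) = 1 then ennreal (exp (l2 + l3)) else 1) \<partial>(Lap b2 \<Otimes>\<^sub>M Lap b3))"
proof -
  interpret L2: prob_space "Lap b2" by (rule prob_space_Lap[OF b2])
  interpret L3: prob_space "Lap b3" by (rule prob_space_Lap[OF b3])
  interpret LL: pair_prob_space "Lap b2" "Lap b3" ..
  have gm: "(\<lambda>r. g (j, r)) \<in> borel_measurable borel" for j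
    using g unfolding svt_slot_space_def by measurable
  have sm: "gslot c e a m k \<in> measurable (Lap b2 \<Otimes>\<^sub>M Lap b3) svt_slot_space" for a m
    using measurable_gslot by (simp cong: measurable_cong_sets)
  let ?W = "\<lambda>s. (if fst s = 1 then ennreal (exp (l2 + l3)) else 1)"
  have Wm: "?W \<in> borel_measurable svt_slot_space"
    unfolding svt_slot_space_def by measurable
  show ?thesis
  proof (cases "k < c")
    case False
    then show ?thesis by (simp add: gslot_def)
  next
    case True
    let ?v = "\<lambda>m u. if e > 0 then m + u else 0"
    define X where "X m = (\<integral>\<^sup>+u. g (1, ?v m u) \<partial>Lap b3)" for m
    define P where "P a = (\<integral>\<^sup>+t. indicator {a..} t \<partial>Lap b2)" for a :: real
    define Q where "Q a = (\<integral>\<^sup>+t. indicator {..<a} t \<partial>Lap b2)" for a :: real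
    have vm: "(\<lambda>u. g (1, ?v m u)) \<in> borel_measurable (Lap b3)" for m
      using gm[of 1] by (cases "e > 0") (simp_all cong: measurable_cong_sets)
    have L: "(\<integral>\<^sup>+y. g (gslot c e ai mi k y) \<partial>(Lap b2 \<Otimes>\<^sub>M Lap b3)) = X mi * P ai + g (0, 0) * Q ai"
      using slot_expand[where F="\<lambda>_. 1" and a=ai and m=mi, OF b2 b3 True g] X_def P_def Q_def by (simp add: X_def)
    have R: "(\<integral>\<^sup>+y. g (gslot c e ai' mi' k y) * ?W (gslot c e ai' mi' k y) \<partial>(Lap b2 \<Otimes>\<^sub>M Lap b3))
         = ennreal (exp (l2 + l3)) * X mi' * P ai' + g (0, 0) * Q ai'"
    proof -
      have "(\<integral>\<^sup>+u. g (1, ?v mi' u) * ?W (1, ?v mi' u) \<partial>Lap b3) = ennreal (exp (l2 + l3)) * X mi'"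
        using nn_integral_cmult[OF vm[of mi'], of "ennreal (exp (l2 + l3))"] by (simp add: X_def mult.commute)
      then show ?thesis using slot_expand[where a=ai' and m=mi', OF b2 b3 True g Wm] P_def Q_def by simp
    qed
    have QQ: "Q ai \<le> Q ai'"
      unfolding Q_def using aa by (intro nn_integral_mono) (auto simp: indicator_def)
    have PP: "P ai \<le> ennreal (exp l2) * P ai'"
    proof -
      have "P ai = (\<integral>\<^sup>+t. indicator {ai'..} (t + (ai' - ai)) \<partial>Lap b2)"
        unfolding P_def by (intro nn_integral_cong) (auto simp: indicator_def)
      also have "\<dots> \<le> ennreal (exp (\<bar>ai' - ai\<bar> / b2)) * P ai'"
        unfolding P_def by (rule nn_integral_Lap_shift[OF b2]) simp
      also have "\<dots> \<le> ennreal (exp l2) * P ai'"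
        using aa b2 by (intro mult_right_mono ennreal_leI) (auto simp: divide_le_eq)
      finally show ?thesis .
    qed
    have XX: "X mi \<le> ennreal (exp l3) * X mi'"
    proof (cases "e > 0")
      case True
      have "X mi = (\<integral>\<^sup>+u. (\<lambda>r. g (1, mi' + r)) (u + (mi - mi')) \<partial>Lap b3)"
        unfolding X_def using True by (intro nn_integral_cong) (simp add: algebra_simps)
      also have "\<dots> \<le> ennreal (exp (\<bar>mi - mi'\<bar> / b3)) * (\<integral>\<^sup>+u. g (1, mi' + u) \<partial>Lap b3)"
        by (rule nn_integral_Lap_shift[OF b3]) (use gm[of 1] in measurable)
      also have "\<dots> \<le> ennreal (exp l3) * X mi'"
        using mm[OF True] b3 True by (auto simp: X_def divide_le_eq intro!: mult_right_mono ennreal_leI)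
      finally show ?thesis .
    next
      case False
      have "1 \<le> ennreal (exp l3)" using l3 by (metis ennreal_1 ennreal_leI one_le_exp_iff)
      from mult_right_mono[OF this, of "X mi'"] have "X mi' \<le> ennreal (exp l3) * X mi'" by simp
      moreover have "X mi = X mi'" using False by (simp add: X_def)
      ultimately show ?thesis by simp
    qed
    have "X mi * P ai \<le> (ennreal (exp l3) * X mi') * (ennreal (exp l2) * P ai')"
      using XX PP by (rule mult_mono) auto
    also have "\<dots> = ennreal (exp (l2 + l3)) * X mi' * P ai'"
      by (simp add: exp_add ennreal_mult mult_ac)
    finally have "X mi * P ai + g (0, 0) * Q ai \<le> ennreal (exp (l2 + l3)) * X mi' * P ai' + g (0, 0) * Q ai'"
      using QQ by (intro add_mono mult_left_mono) auto
    then show ?thesis using L R by simp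
  qed
qed

abbreviation NN :: "nat \<Rightarrow> real \<Rightarrow> real \<Rightarrow> ((nat \<Rightarrow> real) \<times> (nat \<Rightarrow> real)) measure" where
  "NN n b2 b3 \<equiv> PiM {..<n} (\<lambda>_. Lap b2) \<Otimes>\<^sub>M PiM {..<n} (\<lambda>_. Lap b3)"

lemma sets_NN: "sets (NN n b2 b3) = sets (PB n \<Otimes>\<^sub>M PB n)"
  by (intro sets_pair_measure_cong sets_PiM_cong) auto

lemma measurable_gout_N: "gout n c e a m \<in> measurable (NN n b2 b3) (svt_out_space n)"
  using measurable_gout by (simp add: measurable_cong_sets[OF sets_NN refl])

lemma gout_upd: "gout n c e a m ((fst x)(n := t), (snd x)(n := u)) = gout n c e a m x"
proof -
  have "{j. j < i \<and> a j \<le> ((fst x)(n := t)) j} = {j. j < i \<and> a j \<le> fst x j}" if "i < n" for i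
    using that by auto
  then show ?thesis by (auto simp: gout_def fun_eq_iff)
qed

definition wt :: "real \<Rightarrow> nat \<Rightarrow> (nat \<Rightarrow> nat \<times> real) \<Rightarrow> ennreal" where
  "wt L n w = ennreal (exp (L * real (Kcnt n w)))"

lemma wt_Suc: "wt L (Suc n) (w(n := s)) = wt L n w * (if fst s = 1 then ennreal (exp L) else 1)"
  by (simp add: wt_def Kcnt_Suc Kcnt_upd distrib_left exp_add ennreal_mult)

lemma measurable_wt[measurable]: "wt L n \<in> borel_measurable (svt_out_space n)"
proof -
  have [measurable]: "(\<lambda>w. real (Kcnt n w)) \<in> borel_measurable (svt_out_space n)"
    by (rule measurable_Kcnt)
  show ?thesis unfolding wt_def by measurable
qed

lemma core:
  fixes l2 l3 :: real
  assumes b2: "b2 > 0" and b3: "b3 > 0" and l3: "0 \<le> l3"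
    and aa: "\<forall>i<n. a i \<le> a' i \<and> a' i - a i \<le> l2 * b2"
    and mm: "\<forall>i<n. e > 0 \<longrightarrow> \<bar>m i - m' i\<bar> \<le> l3 * b3"
    and G: "G \<in> borel_measurable (svt_out_space n)"
  shows "(\<integral>\<^sup>+x. G (gout n c e a m x) \<partial>NN n b2 b3) \<le>
    (\<integral>\<^sup>+x. G (gout n c e a' m' x) * wt (l2 + l3) n (gout n c e a' m' x) \<partial>NN n b2 b3)"
  using aa mm G
proof (induction n arbitrary: G)
  case 0
  then show ?case by (simp add: gout_def wt_def Kcnt_def)
next
  case (Suc n)
  interpret LL: prob_space "Lap b2 \<Otimes>\<^sub>M Lap b3"
    by (rule prob_space_pair) (rule prob_space_Lap, fact)+
  note G = Suc.prems(3)
  let ?W = "ennreal (exp (l2 + l3))"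
  let ?LL = "Lap b2 \<Otimes>\<^sub>M Lap b3"
  let ?U = "\<lambda>x y. ((fst x)(n := fst y), (snd x)(n := snd y))"
  define HL where "HL w = (\<integral>\<^sup>+y. G (w(n := gslot c e (a n) (m n) (Kcnt n w) y)) \<partial>?LL)" for w
  define HR where "HR w = (\<integral>\<^sup>+y. G (w(n := gslot c e (a' n) (m' n) (Kcnt n w) y)) *
      (if fst (gslot c e (a' n) (m' n) (Kcnt n w) y) = 1 then ?W else 1) \<partial>?LL)" for w
  have sLL: "sets ?LL = sets (borel \<Otimes>\<^sub>M borel)" by (intro sets_pair_measure_cong) auto
  have gupd: "(\<lambda>(w, y). w(n := gslot c e ai mi (Kcnt n w) y)) \<in>
     measurable (svt_out_space n \<Otimes>\<^sub>M ?LL) (svt_out_space (Suc n))" for ai mi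
    using measurable_gupd by (simp add: measurable_cong_sets[OF sets_pair_measure_cong[OF refl sLL] refl])
  have G'm: "(\<lambda>w. G w * (if fst (w n) = 1 then ?W else 1)) \<in> borel_measurable (svt_out_space (Suc n))"
  proof -
    have "(\<lambda>w. w n) \<in> measurable (svt_out_space (Suc n)) svt_slot_space"
      unfolding svt_out_space_def by (rule measurable_component_singleton) simp
    moreover have "(\<lambda>s. if fst s = 1 then ?W else 1) \<in> borel_measurable svt_slot_space"
      unfolding svt_slot_space_def by measurable
    ultimately show ?thesis using G by measurable
  qed
  have HRm: "HR \<in> borel_measurable (svt_out_space n)"
  proof -
    have "(\<lambda>p. (\<lambda>w. G w * (if fst (w n) = 1 then ?W else 1)) ((\<lambda>(w, y). w(n := gslot c e (a' n) (m' n) (Kcnt n w) y)) p))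
       \<in> borel_measurable (svt_out_space n \<Otimes>\<^sub>M ?LL)"
      by (rule measurable_compose[OF gupd G'm])
    then have "(\<lambda>(w, y). G (w(n := gslot c e (a' n) (m' n) (Kcnt n w) y)) *
      (if fst (gslot c e (a' n) (m' n) (Kcnt n w) y) = 1 then ?W else 1)) \<in> borel_measurable (svt_out_space n \<Otimes>\<^sub>M ?LL)"
      by (simp add: case_prod_beta')
    then show ?thesis unfolding HR_def by (rule LL.borel_measurable_nn_integral)
  qed
  have IH: "(\<integral>\<^sup>+x. HR (gout n c e a m x) \<partial>NN n b2 b3) \<le>
    (\<integral>\<^sup>+x. HR (gout n c e a' m' x) * wt (l2 + l3) n (gout n c e a' m' x) \<partial>NN n b2 b3)"
    using Suc.prems(1,2) by (intro Suc.IH HRm) auto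
  have Gs: "(\<lambda>x. G (gout (Suc n) c e aa mm x)) \<in> borel_measurable (NN (Suc n) b2 b3)" for aa mm
    using measurable_compose[OF measurable_gout_N G] .
  have "(\<integral>\<^sup>+x. G (gout (Suc n) c e a m x) \<partial>NN (Suc n) b2 b3) =
     (\<integral>\<^sup>+x. \<integral>\<^sup>+y. G (gout (Suc n) c e a m (?U x y)) \<partial>?LL \<partial>NN n b2 b3)"
    by (rule split_N[OF b2 b3 Gs])
  also have "\<dots> = (\<integral>\<^sup>+x. HL (gout n c e a m x) \<partial>NN n b2 b3)"
    by (intro nn_integral_cong) (simp add: HL_def gout_Suc gout_upd)
  also have "\<dots> \<le> (\<integral>\<^sup>+x. HR (gout n c e a m x) \<partial>NN n b2 b3)"
  proof (intro nn_integral_mono)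
    fix x assume x: "x \<in> space (NN n b2 b3)"
    let ?w = "gout n c e a m x"
    have w: "?w \<in> space (svt_out_space n)"
      using measurable_space[OF measurable_gout_N x] .
    have gm: "(\<lambda>s. G (?w(n := s))) \<in> borel_measurable svt_slot_space"
    proof -
      have "(\<lambda>s. ?w(n := s)) \<in> measurable svt_slot_space (svt_out_space (Suc n))"
        unfolding svt_out_space_def
        by (rule measurable_fun_upd[where J="{..<n}"]) (use w in \<open>auto simp: svt_out_space_def\<close>)
      then show ?thesis using G by measurable
    qed
    have a1: "a n \<le> a' n" "a' n - a n \<le> l2 * b2" and m1: "e > 0 \<Longrightarrow> \<bar>m n - m' n\<bar> \<le> l3 * b3"
      using Suc.prems(1,2) by auto
    show "HL ?w \<le> HR ?w"
      unfolding HL_def HR_def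
      using slot_ineq[where c=c and k="Kcnt n (gout n c e a m x)" and e=e, OF b2 b3 a1 m1 l3 gm] by simp
  qed
  also have "\<dots> \<le> (\<integral>\<^sup>+x. HR (gout n c e a' m' x) * wt (l2 + l3) n (gout n c e a' m' x) \<partial>NN n b2 b3)"
    by (rule IH)
  also have "\<dots> = (\<integral>\<^sup>+x. \<integral>\<^sup>+y. G (gout (Suc n) c e a' m' (?U x y)) * wt (l2 + l3) (Suc n) (gout (Suc n) c e a' m' (?U x y)) \<partial>?LL \<partial>NN n b2 b3)"
  proof (intro nn_integral_cong)
    fix x assume x: "x \<in> space (NN n b2 b3)"
    let ?w = "gout n c e a' m' x"
    have w: "?w \<in> space (svt_out_space n)"
      using measurable_space[OF measurable_gout_N x] .
    have m2: "(\<lambda>y. G (?w(n := gslot c e (a' n) (m' n) (Kcnt n ?w) y)) *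
      (if fst (gslot c e (a' n) (m' n) (Kcnt n ?w) y) = 1 then ?W else 1)) \<in> borel_measurable ?LL"
    proof -
      have "(\<lambda>p. (\<lambda>w. G w * (if fst (w n) = 1 then ?W else 1)) ((\<lambda>(w, y). w(n := gslot c e (a' n) (m' n) (Kcnt n w) y)) p))
         \<in> borel_measurable (svt_out_space n \<Otimes>\<^sub>M ?LL)"
        by (rule measurable_compose[OF gupd G'm])
      from measurable_compose_Pair1[OF w this] show ?thesis by simp
    qed
    show "HR ?w * wt (l2 + l3) n ?w = (\<integral>\<^sup>+y. G (gout (Suc n) c e a' m' (?U x y)) * wt (l2 + l3) (Suc n) (gout (Suc n) c e a' m' (?U x y)) \<partial>?LL)"
      unfolding HR_def nn_integral_multc[OF m2, symmetric]
      by (intro nn_integral_cong) (simp add: gout_Suc gout_upd wt_Suc mult_ac)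
  qed
  also have "\<dots> = (\<integral>\<^sup>+x. G (gout (Suc n) c e a' m' x) * wt (l2 + l3) (Suc n) (gout (Suc n) c e a' m' x) \<partial>NN (Suc n) b2 b3)"
  proof (rule split_N[OF b2 b3, symmetric])
    show "(\<lambda>x. G (gout (Suc n) c e a' m' x) * wt (l2 + l3) (Suc n) (gout (Suc n) c e a' m' x)) \<in> borel_measurable (NN (Suc n) b2 b3)"
      using measurable_gout_N G by measurable
  qed
  finally show ?case .
qed



lemma svt_output_eq:
  "svt_output n c e3 q T D (\<rho>, x) = gout n c e3 (\<lambda>i. T i + \<rho> - q i D) (\<lambda>i. q i D) x"
proof -
  have "{j. j < i \<and> svt_test q T D \<rho> (fst x) j} = {j. j < i \<and> T j + \<rho> - q j D \<le> fst x j}" for i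
    by (auto simp: svt_test_def)
  then show ?thesis
    by (cases x) (auto simp: svt_output_def gout_def gslot_def svt_test_def fun_eq_iff)
qed

lemma svt_output_eq2:
  "svt_output n c e3 q T D (\<rho>, x) = gout n c e3 (\<lambda>i. T i - q i D) (\<lambda>i. q i D) (restrict (\<lambda>i. fst x i - \<rho>) {..<n}, snd x)"
proof -
  have "{j. j < i \<and> svt_test q T D \<rho> (fst x) j} = {j. j < i \<and> T j - q j D \<le> restrict (\<lambda>i. fst x i - \<rho>) {..<n} j}"
    if "i < n" for i
    using that by (auto simp: svt_test_def)
  then show ?thesis
    by (cases x) (auto simp: svt_output_def gout_def gslot_def svt_test_def fun_eq_iff)
qed

lemma measurable_svt_output:
  "svt_output n c e3 q T D \<in> measurable (Lap b1 \<Otimes>\<^sub>M NN n b2 b3) (svt_out_space n)"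
proof -
  have s: "sets (Lap b1 \<Otimes>\<^sub>M NN n b2 b3) = sets (borel \<Otimes>\<^sub>M (PB n \<Otimes>\<^sub>M PB n))"
    by (intro sets_pair_measure_cong sets_NN) simp
  have c1: "(\<lambda>z. fst (snd z) i) \<in> borel_measurable (borel \<Otimes>\<^sub>M (PB n \<Otimes>\<^sub>M PB n))" if "i < n" for i
    using that by (intro measurable_compose[OF measurable_snd measurable_fst_comp])
  have phi: "(\<lambda>z. (restrict (\<lambda>i. fst (snd z) i - fst z) {..<n}, snd (snd z))) \<in>
     measurable (borel \<Otimes>\<^sub>M (PB n \<Otimes>\<^sub>M PB n)) (PB n \<Otimes>\<^sub>M PB n)"
  proof (rule measurable_Pair)
    show "(\<lambda>z. restrict (\<lambda>i. fst (snd z) i - fst z) {..<n}) \<in> measurable (borel \<Otimes>\<^sub>M (PB n \<Otimes>\<^sub>M PB n)) (PB n)"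
      by (rule measurable_restrict) (use c1 in measurable)
    show "(\<lambda>z. snd (snd z)) \<in> measurable (borel \<Otimes>\<^sub>M (PB n \<Otimes>\<^sub>M PB n)) (PB n)"
      by measurable
  qed
  have "svt_output n c e3 q T D = (\<lambda>z. gout n c e3 (\<lambda>i. T i - q i D) (\<lambda>i. q i D) (restrict (\<lambda>i. fst (snd z) i - fst z) {..<n}, snd (snd z)))"
    by (auto simp: fun_eq_iff svt_output_eq2 simp del: svt_output_def)
  moreover have "\<dots> \<in> measurable (borel \<Otimes>\<^sub>M (PB n \<Otimes>\<^sub>M PB n)) (svt_out_space n)"
    using measurable_compose[OF phi measurable_gout] .
  ultimately show ?thesis by (simp add: measurable_cong_sets[OF s refl])
qed

theorem theorem4:
  fixes n c :: nat and \<Delta> \<epsilon>1 \<epsilon>2 \<epsilon>3 :: real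
    and q :: "nat \<Rightarrow> 'a multiset \<Rightarrow> real" and T :: "nat \<Rightarrow> real"
  assumes "\<epsilon>1 > 0" and "\<epsilon>2 > 0" and "\<epsilon>3 \<ge> 0" and "\<Delta> > 0" and "c \<ge> 1"
    and "\<forall>i<n. sensitivity_le (q i) \<Delta>"
    and "monotonic_queries n q"
    and "neighbors D D'"
    and "S \<in> sets (svt_out_space n)"
  shows "measure (svt_mod n c \<Delta> \<epsilon>1 \<epsilon>2 \<epsilon>3 q T D) S
         \<le> exp (\<epsilon>1 + \<epsilon>2 + \<epsilon>3) * measure (svt_mod n c \<Delta> \<epsilon>1 \<epsilon>2 \<epsilon>3 q T D') S"
proof -
  note e1 = assms(1) and e2 = assms(2) and e3 = assms(3) and Dp = assms(4) and c1 = assms(5)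
  note S[measurable] = assms(9)
  define b1 where "b1 = \<Delta> / \<epsilon>1"
  define b2 where "b2 = real c * \<Delta> / \<epsilon>2"
  define b3 where "b3 = (if \<epsilon>3 > 0 then real c * \<Delta> / \<epsilon>3 else 1)"
  have cpos: "real c > 0" using c1 by simp
  have b1: "b1 > 0" using e1 Dp by (simp add: b1_def)
  have b2: "b2 > 0" using e2 Dp cpos by (simp add: b2_def)
  have b3: "b3 > 0" using e3 Dp cpos by (simp add: b3_def)
  have sens: "\<bar>q i D - q i D'\<bar> \<le> \<Delta>" if "i < n" for i
    using assms(6,8) that by (auto simp: sensitivity_le_def)
  interpret L1: prob_space "Lap b1" by (rule prob_space_Lap[OF b1])
  interpret NNp: prob_space "NN n b2 b3"
    by (intro prob_space_pair prob_space_PiM prob_space_Lap b2 b3)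
  interpret Noi: prob_space "Lap b1 \<Otimes>\<^sub>M NN n b2 b3"
    by (intro prob_space_pair prob_space_PiM prob_space_Lap b1 b2 b3)
  have noise: "svt_noise n c \<Delta> \<epsilon>1 \<epsilon>2 \<epsilon>3 = Lap b1 \<Otimes>\<^sub>M NN n b2 b3"
    by (simp add: svt_noise_def b1_def b2_def b3_def)
  define H where "H Dx \<rho> = (\<integral>\<^sup>+x. indicator S (svt_output n c \<epsilon>3 q T Dx (\<rho>, x)) \<partial>NN n b2 b3)" for Dx \<rho>
  have om: "svt_output n c \<epsilon>3 q T Dx \<in> measurable (Lap b1 \<Otimes>\<^sub>M NN n b2 b3) (svt_out_space n)" for Dx
    by (rule measurable_svt_output)
  have Em: "emeasure (svt_mod n c \<Delta> \<epsilon>1 \<epsilon>2 \<epsilon>3 q T Dx) S = (\<integral>\<^sup>+\<rho>. H Dx \<rho> \<partial>Lap b1)" for Dx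
  proof -
    have "emeasure (svt_mod n c \<Delta> \<epsilon>1 \<epsilon>2 \<epsilon>3 q T Dx) S = (\<integral>\<^sup>+y. indicator S y \<partial>svt_mod n c \<Delta> \<epsilon>1 \<epsilon>2 \<epsilon>3 q T Dx)"
      by (rule nn_integral_indicator[symmetric]) (simp add: svt_mod_def)
    also have "\<dots> = (\<integral>\<^sup>+z. indicator S (svt_output n c \<epsilon>3 q T Dx z) \<partial>(Lap b1 \<Otimes>\<^sub>M NN n b2 b3))"
      unfolding svt_mod_def noise by (rule nn_integral_distr[OF om]) simp
    also have "\<dots> = (\<integral>\<^sup>+\<rho>. H Dx \<rho> \<partial>Lap b1)"
      unfolding H_def by (rule NNp.nn_integral_fst[symmetric]) (use om in measurable)
    finally show ?thesis .
  qed
  have Hm: "H Dx \<in> borel_measurable borel" for Dx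
  proof -
    have "(\<lambda>z. indicator S (svt_output n c \<epsilon>3 q T Dx z) :: ennreal) \<in> borel_measurable (Lap b1 \<Otimes>\<^sub>M NN n b2 b3)"
      using om by measurable
    then have "H Dx \<in> borel_measurable (Lap b1)"
      unfolding H_def by (intro NNp.borel_measurable_nn_integral) (simp add: case_prod_beta')
    then show ?thesis by (simp cong: measurable_cong_sets)
  qed
  define l2 where "l2 = \<epsilon>2 / real c"
  define l3 where "l3 = (if \<epsilon>3 > 0 then \<epsilon>3 / real c else 0)"
  have l2: "l2 * b2 = \<Delta>" using e2 cpos by (simp add: l2_def b2_def)
  have l3: "0 \<le> l3" using e3 cpos by (simp add: l3_def)
  have l3b: "\<epsilon>3 > 0 \<Longrightarrow> l3 * b3 = \<Delta>" using cpos by (simp add: l3_def b3_def)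
  have lc: "(l2 + l3) * real c \<le> \<epsilon>2 + \<epsilon>3"
    using cpos e3 by (simp add: l2_def l3_def distrib_right)
  have l23: "0 \<le> l2 + l3" using l3 e2 cpos by (simp add: l2_def)
  have key: "H D \<rho> \<le> ennreal (exp (\<epsilon>2 + \<epsilon>3)) * H D' \<rho>'"
    if th: "\<forall>i<n. T i + \<rho> - q i D \<le> T i + \<rho>' - q i D' \<and> (T i + \<rho>' - q i D') - (T i + \<rho> - q i D) \<le> \<Delta>" for \<rho> \<rho>'
  proof -
    let ?a = "\<lambda>i. T i + \<rho> - q i D" and ?a' = "\<lambda>i. T i + \<rho>' - q i D'"
    let ?m = "\<lambda>i. q i D" and ?m' = "\<lambda>i. q i D'"
    have "H D \<rho> = (\<integral>\<^sup>+x. indicator S (gout n c \<epsilon>3 ?a ?m x) \<partial>NN n b2 b3)"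
      by (simp add: H_def svt_output_eq del: svt_output_def)
    also have "\<dots> \<le> (\<integral>\<^sup>+x. indicator S (gout n c \<epsilon>3 ?a' ?m' x) * wt (l2 + l3) n (gout n c \<epsilon>3 ?a' ?m' x) \<partial>NN n b2 b3)"
    proof (rule core[OF b2 b3 l3])
      show "\<forall>i<n. ?a i \<le> ?a' i \<and> ?a' i - ?a i \<le> l2 * b2" using th l2 by simp
      show "\<forall>i<n. 0 < \<epsilon>3 \<longrightarrow> \<bar>?m i - ?m' i\<bar> \<le> l3 * b3" using sens l3b by simp
      show "indicator S \<in> borel_measurable (svt_out_space n)" by simp
    qed
    also have "\<dots> \<le> (\<integral>\<^sup>+x. ennreal (exp (\<epsilon>2 + \<epsilon>3)) * indicator S (gout n c \<epsilon>3 ?a' ?m' x) \<partial>NN n b2 b3)"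
    proof (intro nn_integral_mono)
      fix x
      have "(l2 + l3) * real (Kcnt n (gout n c \<epsilon>3 ?a' ?m' x)) \<le> (l2 + l3) * real c"
        using Kcnt_le l23 by (intro mult_left_mono) auto
      then have "wt (l2 + l3) n (gout n c \<epsilon>3 ?a' ?m' x) \<le> ennreal (exp (\<epsilon>2 + \<epsilon>3))"
        unfolding wt_def using lc by (intro ennreal_leI) simp
      then have "indicator S (gout n c \<epsilon>3 ?a' ?m' x) * wt (l2 + l3) n (gout n c \<epsilon>3 ?a' ?m' x)
          \<le> indicator S (gout n c \<epsilon>3 ?a' ?m' x) * ennreal (exp (\<epsilon>2 + \<epsilon>3))"
        by (rule mult_left_mono) simp
      then show "indicator S (gout n c \<epsilon>3 ?a' ?m' x) * wt (l2 + l3) n (gout n c \<epsilon>3 ?a' ?m' x)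
          \<le> ennreal (exp (\<epsilon>2 + \<epsilon>3)) * indicator S (gout n c \<epsilon>3 ?a' ?m' x)"
        by (simp only: mult.commute)
    qed
    also have "\<dots> = ennreal (exp (\<epsilon>2 + \<epsilon>3)) * H D' \<rho>'"
    proof -
      have "(\<lambda>x. indicator S (gout n c \<epsilon>3 ?a' ?m' x) :: ennreal) \<in> borel_measurable (NN n b2 b3)"
        using measurable_gout_N by measurable
      then show ?thesis by (simp add: nn_integral_cmult H_def svt_output_eq del: svt_output_def)
    qed
    finally show ?thesis .
  qed
  have E: "emeasure (svt_mod n c \<Delta> \<epsilon>1 \<epsilon>2 \<epsilon>3 q T D) S \<le>
      ennreal (exp (\<epsilon>1 + \<epsilon>2 + \<epsilon>3)) * emeasure (svt_mod n c \<Delta> \<epsilon>1 \<epsilon>2 \<epsilon>3 q T D') S"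
    unfolding Em
  proof -
    from assms(7,8) have "(\<forall>i<n. q i D \<ge> q i D') \<or> (\<forall>i<n. q i D \<le> q i D')"
      by (auto simp: monotonic_queries_def)
    then show "(\<integral>\<^sup>+\<rho>. H D \<rho> \<partial>Lap b1) \<le> ennreal (exp (\<epsilon>1 + \<epsilon>2 + \<epsilon>3)) * (\<integral>\<^sup>+\<rho>. H D' \<rho> \<partial>Lap b1)"
    proof
      assume up: "\<forall>i<n. q i D \<ge> q i D'"
      have "(\<integral>\<^sup>+\<rho>. H D \<rho> \<partial>Lap b1) \<le> (\<integral>\<^sup>+\<rho>. ennreal (exp (\<epsilon>2 + \<epsilon>3)) * H D' \<rho> \<partial>Lap b1)"
      proof (intro nn_integral_mono key allI impI)
        fix \<rho> i assume i: "i < n"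
        show "T i + \<rho> - q i D \<le> T i + \<rho> - q i D' \<and> (T i + \<rho> - q i D') - (T i + \<rho> - q i D) \<le> \<Delta>"
          using up sens[OF i] i by auto
      qed
      also have "\<dots> = ennreal (exp (\<epsilon>2 + \<epsilon>3)) * (\<integral>\<^sup>+\<rho>. H D' \<rho> \<partial>Lap b1)"
        using Hm by (simp add: nn_integral_cmult cong: measurable_cong_sets)
      also have "\<dots> \<le> ennreal (exp (\<epsilon>1 + \<epsilon>2 + \<epsilon>3)) * (\<integral>\<^sup>+\<rho>. H D' \<rho> \<partial>Lap b1)"
        using e1 by (intro mult_right_mono ennreal_leI) auto
      finally show ?thesis .
    next
      assume down: "\<forall>i<n. q i D \<le> q i D'"
      have "(\<integral>\<^sup>+\<rho>. H D \<rho> \<partial>Lap b1) \<le> (\<integral>\<^sup>+\<rho>. ennreal (exp (\<epsilon>2 + \<epsilon>3)) * H D' (\<rho> + \<Delta>) \<partial>Lap b1)"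
      proof (intro nn_integral_mono key allI impI)
        fix \<rho> i assume i: "i < n"
        show "T i + \<rho> - q i D \<le> T i + (\<rho> + \<Delta>) - q i D' \<and> (T i + (\<rho> + \<Delta>) - q i D') - (T i + \<rho> - q i D) \<le> \<Delta>"
          using down sens[OF i] i by auto
      qed
      also have "\<dots> = ennreal (exp (\<epsilon>2 + \<epsilon>3)) * (\<integral>\<^sup>+\<rho>. H D' (\<rho> + \<Delta>) \<partial>Lap b1)"
      proof -
        have "(\<lambda>\<rho>. H D' (\<rho> + \<Delta>)) \<in> borel_measurable (Lap b1)"
          using Hm by (simp cong: measurable_cong_sets)
        then show ?thesis by (simp add: nn_integral_cmult)
      qed
      also have "\<dots> \<le> ennreal (exp (\<epsilon>2 + \<epsilon>3)) * (ennreal (exp (\<bar>\<Delta>\<bar> / b1)) * (\<integral>\<^sup>+\<rho>. H D' \<rho> \<partial>Lap b1))"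
        by (intro mult_left_mono nn_integral_Lap_shift[OF b1 Hm]) simp
      also have "\<dots> = ennreal (exp (\<epsilon>1 + \<epsilon>2 + \<epsilon>3)) * (\<integral>\<^sup>+\<rho>. H D' \<rho> \<partial>Lap b1)"
        using Dp e1 by (simp add: b1_def mult.assoc[symmetric] ennreal_mult[symmetric] exp_add[symmetric] add_ac)
      finally show ?thesis .
    qed
  qed
  interpret M1: prob_space "svt_mod n c \<Delta> \<epsilon>1 \<epsilon>2 \<epsilon>3 q T D"
    unfolding svt_mod_def noise by (rule Noi.prob_space_distr[OF om])
  interpret M2: prob_space "svt_mod n c \<Delta> \<epsilon>1 \<epsilon>2 \<epsilon>3 q T D'"
    unfolding svt_mod_def noise by (rule Noi.prob_space_distr[OF om])
  have "ennreal (measure (svt_mod n c \<Delta> \<epsilon>1 \<epsilon>2 \<epsilon>3 q T D) S) \<le>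
     ennreal (exp (\<epsilon>1 + \<epsilon>2 + \<epsilon>3) * measure (svt_mod n c \<Delta> \<epsilon>1 \<epsilon>2 \<epsilon>3 q T D') S)"
    using E by (simp add: M1.emeasure_eq_measure M2.emeasure_eq_measure ennreal_mult)
  then show ?thesis by (rule ennreal_le_iff[THEN iffD1, rotated]) simp
qed

end
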